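(* Let $M$ be a matroid, and suppose that $M\cong M_1\mathbin{\Box}\cdots\mathbin{\Box} M_k$ and $M\cong N_1\mathbin{\Box}\cdots\mathbin{\Box} N_r$, where all the matroids $M_i$ and $N_j$ are irreducible (and the factors in each product are taken on pairwise disjoint ground sets). Then $k=r$ and $M_i\cong N_i$ for $1\leq i\leq k$.
   Context: For a matroid $M$ on a finite set $S$ write $\rho_M$ for its rank function, $\rho(M)=\rho_M(S)$, $\nu_M(A)=|A|-\rho_M(A)$ for its nullity function, and $\lambda_M(A)=\rho(M)-\rho_M(A)$ for its rank-lack function. For matroids $M$ on $S$ and $N$ on $T$ with $S\cap T=\emptyset$, the free product $M\mathbin{\Box} N$ is the matroid on $S\cup T$ whose independent sets are those $A\subseteq S\cup T$ such that $A\cap S$ is independent in $M$ and $\lambda_M(A\cap S)\geq \nu_N(A\cap T)$. Free product is associative, so iterated free products need no parentheses. A matroid $M$ is irreducible if it is nonempty (has nonempty ground set) and every factorization of $M$ as a free product of matroids contains $M$ itself as a factor; the empty matroid is not irreducible. *)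

theory Defs
  imports Main
begin

type_synonym 'a matroid = "'a set \<times> ('a set \<Rightarrow> bool)"

definition ground :: "'a matroid \<Rightarrow> 'a set" where
  "ground M = fst M"

definition indep :: "'a matroid \<Rightarrow> 'a set \<Rightarrow> bool" where
  "indep M A = snd M A"

definition matroid :: "'a matroid \<Rightarrow> bool" where
  "matroid M \<longleftrightarrow>
     finite (ground M) \<and>
     indep M {} \<and>
     (\<forall>A. indep M A \<longrightarrow> A \<subseteq> ground M) \<and>
     (\<forall>A B. indep M A \<and> B \<subseteq> A \<longrightarrow> indep M B) \<and>
     (\<forall>A B. indep M A \<and> indep M B \<and> card A < card B \<longrightarrow>
        (\<exists>x\<in>B - A. indep M (insert x A)))"

definition rk :: "'a matroid \<Rightarrow> 'a set \<Rightarrow> nat" where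
  "rk M A = Max (card ` {B. B \<subseteq> A \<and> indep M B})"

definition nullity :: "'a matroid \<Rightarrow> 'a set \<Rightarrow> nat" where
  "nullity M A = card A - rk M A"

definition ranklack :: "'a matroid \<Rightarrow> 'a set \<Rightarrow> nat" where
  "ranklack M A = rk M (ground M) - rk M A"

text \<open>Free product (intended for matroids on disjoint ground sets).\<close>
definition free_product :: "'a matroid \<Rightarrow> 'a matroid \<Rightarrow> 'a matroid" where
  "free_product M N =
     (ground M \<union> ground N,
      \<lambda>A. A \<subseteq> ground M \<union> ground N \<and> indep M (A \<inter> ground M) \<and>
          ranklack M (A \<inter> ground M) \<ge> nullity N (A \<inter> ground N))"

definition empty_matroid :: "'a matroid" where
  "empty_matroid = ({}, \<lambda>A. A = {})"

definition free_product_list :: "'a matroid list \<Rightarrow> 'a matroid" where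
  "free_product_list Ms = foldr free_product Ms empty_matroid"

definition pairwise_disjoint_grounds :: "'a matroid list \<Rightarrow> bool" where
  "pairwise_disjoint_grounds Ms \<longleftrightarrow>
     (\<forall>i<length Ms. \<forall>j<length Ms. i \<noteq> j \<longrightarrow> ground (Ms ! i) \<inter> ground (Ms ! j) = {})"

definition irreducible_matroid :: "'a matroid \<Rightarrow> bool" where
  "irreducible_matroid M \<longleftrightarrow>
     matroid M \<and> ground M \<noteq> {} \<and>
     (\<forall>Ms. (\<forall>N\<in>set Ms. matroid N) \<and> pairwise_disjoint_grounds Ms \<and>
            free_product_list Ms = M \<longrightarrow> M \<in> set Ms)"

definition matroid_iso :: "'a matroid \<Rightarrow> 'b matroid \<Rightarrow> bool" where
  "matroid_iso M N \<longleftrightarrow>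
     (\<exists>f. bij_betw f (ground M) (ground N) \<and>
          (\<forall>A\<subseteq>ground M. indep M A \<longleftrightarrow> indep N (f ` A)))"

end

theory Submission
  imports Defs
begin

lemma m_fin: "matroid P \<Longrightarrow> finite (ground P)" by (simp add: matroid_def)
lemma m_empty: "matroid P \<Longrightarrow> indep P {}" by (simp add: matroid_def)
lemma m_ground: "matroid P \<Longrightarrow> indep P A \<Longrightarrow> A \<subseteq> ground P" by (simp add: matroid_def)
lemma m_sub: assumes "matroid P" "indep P A" "B \<subseteq> A" shows "indep P B"
proof -
  have "\<forall>A B. indep P A \<and> B \<subseteq> A \<longrightarrow> indep P B" using assms(1) unfolding matroid_def by simp
  thus ?thesis using assms(2,3) by simp
qed
lemma m_aug: assumes "matroid P" "indep P A" "indep P B" "card A < card B" shows "\<exists>x\<in>B-A. indep P (insert x A)"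
proof -
  have "\<forall>A B. indep P A \<and> indep P B \<and> card A < card B \<longrightarrow> (\<exists>x\<in>B - A. indep P (insert x A))"
    using assms(1) unfolding matroid_def by simp
  thus ?thesis using assms(2,3,4) by simp
qed
lemma m_finite: "matroid P \<Longrightarrow> indep P A \<Longrightarrow> finite A"
  using m_fin m_ground finite_subset by metis

lemma Ind_finite: "matroid P \<Longrightarrow> finite {B. B \<subseteq> X \<and> indep P B}"
proof -
  assume m: "matroid P"
  have "{B. B \<subseteq> X \<and> indep P B} \<subseteq> Pow (ground P)" using m_ground[OF m] by blast
  thus ?thesis using m_fin[OF m] finite_subset by blast
qed

lemma rk_witness: assumes "matroid P" shows "\<exists>B. B \<subseteq> X \<and> indep P B \<and> card B = rk P X"
proof -
  have f: "finite (card ` {B. B \<subseteq> X \<and> indep P B})" using Ind_finite[OF assms] by simp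
  have ne: "card ` {B. B \<subseteq> X \<and> indep P B} \<noteq> {}" using m_empty[OF assms] by blast
  from Max_in[OF f ne] show ?thesis unfolding rk_def by force
qed

lemma rk_ge: assumes "matroid P" "B \<subseteq> X" "indep P B" shows "card B \<le> rk P X"
proof -
  have f: "finite (card ` {B. B \<subseteq> X \<and> indep P B})" using Ind_finite[OF assms(1)] by simp
  show ?thesis unfolding rk_def using assms by (intro Max_ge[OF f]) auto
qed

lemma rk_mono: assumes m: "matroid P" and XY: "X \<subseteq> Y" shows "rk P X \<le> rk P Y"
proof -
  obtain B where "B \<subseteq> X" "indep P B" "card B = rk P X" using rk_witness[OF m] by blast
  thus ?thesis using rk_ge[OF m, of B Y] XY by auto
qed

lemma rk_le_card: assumes m: "matroid P" and f: "finite X" shows "rk P X \<le> card X"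
proof -
  obtain B where B: "B \<subseteq> X" "indep P B" "card B = rk P X" using rk_witness[OF m] by blast
  have "card B \<le> card X" using card_mono[OF f B(1)] .
  thus ?thesis using B(3) by simp
qed

lemma rk_indep: assumes m: "matroid P" and i: "indep P X" shows "rk P X = card X"
  using rk_ge[OF m order_refl i] rk_le_card[OF m m_finite[OF m i]] by simp

lemma indep_of_rk: assumes "matroid P" "finite X" "card X \<le> rk P X" shows "indep P X"
proof -
  obtain B where "B \<subseteq> X" "indep P B" "card B = rk P X" using rk_witness[OF assms(1)] by blast
  with assms card_seteq[of X B] show ?thesis by auto
qed

lemma rk_empty: "matroid P \<Longrightarrow> rk P {} = 0"
  using rk_le_card[of P "{}"] by simp

lemma rk_extend: assumes m: "matroid P" and I: "indep P I" "I \<subseteq> X"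
  shows "\<exists>J. I \<subseteq> J \<and> J \<subseteq> X \<and> indep P J \<and> card J = rk P X"
proof -
  let ?F = "{J. I \<subseteq> J \<and> J \<subseteq> X \<and> indep P J}"
  have fF: "finite ?F" using Ind_finite[OF m, of X] by (rule finite_subset[rotated]) blast
  have f: "finite (card ` ?F)" using fF by simp
  have ne: "card ` ?F \<noteq> {}" using I by blast
  obtain J where J: "J \<in> ?F" "card J = Max (card ` ?F)" using Max_in[OF f ne] by force
  have le: "card J \<le> rk P X" using J rk_ge[OF m] by blast
  show ?thesis
  proof (rule ccontr)
    assume "\<not> ?thesis"
    hence lt: "card J < rk P X" using J le by force
    obtain B where B: "B \<subseteq> X" "indep P B" "card B = rk P X" using rk_witness[OF m] by blast
    obtain x where x: "x \<in> B - J" "indep P (insert x J)" using m_aug[OF m, of J B] J B lt by auto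
    have "insert x J \<in> ?F" using x J B by auto
    hence "card (insert x J) \<le> Max (card ` ?F)" using f by (intro Max_ge) auto
    moreover have "card (insert x J) = Suc (card J)" using x J m_finite[OF m] by auto
    ultimately show False using J by simp
  qed
qed

lemma rk_subadd: assumes m: "matroid P" and fB: "finite B" shows "rk P (A \<union> B) \<le> rk P A + card B"
proof -
  obtain J where J: "J \<subseteq> A \<union> B" "indep P J" "card J = rk P (A \<union> B)" using rk_witness[OF m] by blast
  have fJ: "finite J" using m_finite[OF m J(2)] .
  have "J = (J \<inter> A) \<union> (J - A)" by blast
  hence "card J \<le> card (J \<inter> A) + card (J - A)" by (metis card_Un_le)
  moreover have "card (J \<inter> A) \<le> rk P A" using rk_ge[OF m, of "J \<inter> A" A] m_sub[OF m J(2)] by blast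
  moreover have "card (J - A) \<le> card B" using J fB by (intro card_mono) auto
  ultimately show ?thesis using J by linarith
qed

definition restr :: "'a matroid \<Rightarrow> 'a set \<Rightarrow> 'a matroid" where
  "restr P S = (S, \<lambda>A. A \<subseteq> S \<and> indep P A)"
definition contr :: "'a matroid \<Rightarrow> 'a set \<Rightarrow> 'a matroid" where
  "contr P S = (ground P - S, \<lambda>Y. Y \<subseteq> ground P - S \<and> rk P (Y \<union> S) = card Y + rk P S)"
definition goodin :: "'a matroid \<Rightarrow> 'a set \<Rightarrow> 'a set \<Rightarrow> bool" where
  "goodin P W U \<longleftrightarrow> (\<forall>X. X \<subseteq> W \<longrightarrow> indep P (X \<inter> U) \<longrightarrow> card X \<le> rk P (X \<union> U) \<longrightarrow> indep P X)"
definition primeset :: "'a matroid \<Rightarrow> 'a set \<Rightarrow> bool" where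
  "primeset P S \<longleftrightarrow> (\<forall>U. U \<subseteq> S \<longrightarrow> goodin P S U \<longrightarrow> U = {} \<or> U = S)"

lemma ground_restr[simp]: "ground (restr P S) = S" by (simp add: restr_def ground_def)
lemma indep_restr[simp]: "indep (restr P S) A \<longleftrightarrow> A \<subseteq> S \<and> indep P A" by (simp add: restr_def indep_def)
lemma ground_contr[simp]: "ground (contr P S) = ground P - S" by (simp add: contr_def ground_def)
lemma indep_contr: "indep (contr P S) Y \<longleftrightarrow> Y \<subseteq> ground P - S \<and> rk P (Y \<union> S) = card Y + rk P S"
  by (simp add: contr_def indep_def)
lemma ground_fp[simp]: "ground (free_product M N) = ground M \<union> ground N"
  by (simp add: free_product_def ground_def)
lemma indep_fp: "indep (free_product M N) A \<longleftrightarrow> A \<subseteq> ground M \<union> ground N \<and> indep M (A \<inter> ground M) \<and>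
    nullity N (A \<inter> ground N) \<le> ranklack M (A \<inter> ground M)"
  by (simp add: free_product_def indep_def ground_def)

lemma matroid_eqI:
  assumes "ground M = ground N" "\<And>A. indep M A \<longleftrightarrow> indep N A" shows "M = N"
proof -
  have "fst M = fst N" using assms(1) by (simp add: ground_def)
  moreover have "snd M = snd N" using assms(2) by (simp add: indep_def fun_eq_iff)
  ultimately show ?thesis by (simp add: prod_eq_iff)
qed

lemma rk_restr: assumes "X \<subseteq> S" shows "rk (restr P S) X = rk P X"
proof -
  have "{B. B \<subseteq> X \<and> indep (restr P S) B} = {B. B \<subseteq> X \<and> indep P B}" using assms by auto
  thus ?thesis by (simp add: rk_def)
qed

lemma matroid_restr: assumes m: "matroid P" and S: "S \<subseteq> ground P" shows "matroid (restr P S)"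
proof -
  have "finite (ground (restr P S))" using m_fin[OF m] S finite_subset by auto
  moreover have "indep (restr P S) {}" using m_empty[OF m] by simp
  moreover have "\<forall>A. indep (restr P S) A \<longrightarrow> A \<subseteq> ground (restr P S)" by simp
  moreover have "\<forall>A B. indep (restr P S) A \<and> B \<subseteq> A \<longrightarrow> indep (restr P S) B"
    using m_sub[OF m] by auto
  moreover have "\<forall>A B. indep (restr P S) A \<and> indep (restr P S) B \<and> card A < card B \<longrightarrow>
        (\<exists>x\<in>B - A. indep (restr P S) (insert x A))"
  proof (intro allI impI)
    fix A B assume h: "indep (restr P S) A \<and> indep (restr P S) B \<and> card A < card B"
    then obtain x where "x \<in> B - A" "indep P (insert x A)" using m_aug[OF m, of A B] by auto
    thus "\<exists>x\<in>B - A. indep (restr P S) (insert x A)" using h by auto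
  qed
  ultimately show ?thesis unfolding matroid_def by (intro conjI) assumption+
qed

lemma rk_basis_union:
  assumes m: "matroid P" and B: "B \<subseteq> S" "indep P B" "card B = rk P S"
  shows "rk P (Z \<union> B) = rk P (Z \<union> S)"
proof (rule antisym)
  have "Z \<union> B \<subseteq> Z \<union> S" using B(1) by blast
  thus "rk P (Z \<union> B) \<le> rk P (Z \<union> S)" by (rule rk_mono[OF m])
next
  obtain J where J: "B \<subseteq> J" "J \<subseteq> Z \<union> S" "indep P J" "card J = rk P (Z \<union> S)"
    using rk_extend[OF m B(2), of "Z \<union> S"] B(1) by blast
  have "indep P (J \<inter> S)" using m_sub[OF m J(3)] by blast
  hence "card (J \<inter> S) \<le> rk P S" using rk_ge[OF m, of "J \<inter> S" S] by simp
  moreover have "finite (J \<inter> S)" using m_finite[OF m J(3)] by simp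
  moreover have "B \<subseteq> J \<inter> S" using J B by blast
  ultimately have "B = J \<inter> S" using card_seteq[of "J \<inter> S" B] B(3) by simp
  hence "J \<subseteq> Z \<union> B" using J by blast
  hence "card J \<le> rk P (Z \<union> B)" using rk_ge[OF m _ J(3)] by simp
  thus "rk P (Z \<union> S) \<le> rk P (Z \<union> B)" using J(4) by simp
qed

lemma contr_alt:
  assumes m: "matroid P" and B: "B \<subseteq> S" "indep P B" "card B = rk P S"
    and Y: "Y \<inter> S = {}" "Y \<subseteq> ground P"
  shows "rk P (Y \<union> S) = card Y + rk P S \<longleftrightarrow> indep P (Y \<union> B)"
proof -
  have fY: "finite Y" using m_fin[OF m] Y finite_subset by blast
  have fB: "finite B" using m_finite[OF m B(2)] .
  have c: "card (Y \<union> B) = card Y + card B" using Y B fY fB by (intro card_Un_disjoint) auto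
  have r: "rk P (Y \<union> B) = rk P (Y \<union> S)" using rk_basis_union[OF m B] .
  show ?thesis
  proof
    assume "rk P (Y \<union> S) = card Y + rk P S"
    thus "indep P (Y \<union> B)" using indep_of_rk[OF m, of "Y \<union> B"] fY fB c r B(3) by simp
  next
    assume "indep P (Y \<union> B)"
    thus "rk P (Y \<union> S) = card Y + rk P S" using rk_indep[OF m] c r B(3) by metis
  qed
qed

lemma matroid_contr: assumes m: "matroid P" and S: "S \<subseteq> ground P" shows "matroid (contr P S)"
proof -
  obtain B where B: "B \<subseteq> S" "indep P B" "card B = rk P S" using rk_witness[OF m] by blast
  have iff: "indep (contr P S) Y \<longleftrightarrow> Y \<subseteq> ground P - S \<and> indep P (Y \<union> B)" for Y
    unfolding indep_contr using contr_alt[OF m B, of Y] by blast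
  have "finite (ground (contr P S))" using m_fin[OF m] by simp
  moreover have "indep (contr P S) {}" using iff B by simp
  moreover have "\<forall>A. indep (contr P S) A \<longrightarrow> A \<subseteq> ground (contr P S)" using iff by simp
  moreover have "\<forall>A C. indep (contr P S) A \<and> C \<subseteq> A \<longrightarrow> indep (contr P S) C"
  proof (intro allI impI)
    fix A C assume h: "indep (contr P S) A \<and> C \<subseteq> A"
    hence "indep P (C \<union> B)" using iff m_sub[OF m, of "A \<union> B" "C \<union> B"] by blast
    thus "indep (contr P S) C" using iff h by blast
  qed
  moreover have "\<forall>A C. indep (contr P S) A \<and> indep (contr P S) C \<and> card A < card C \<longrightarrow>
        (\<exists>x\<in>C - A. indep (contr P S) (insert x A))"
  proof (intro allI impI)
    fix A C assume h: "indep (contr P S) A \<and> indep (contr P S) C \<and> card A < card C"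
    have "A \<subseteq> ground P" "C \<subseteq> ground P" using h iff by blast+
    hence fA: "finite A" "finite C" using m_fin[OF m] finite_subset by blast+
    have fB: "finite B" using m_finite[OF m B(2)] .
    have dA: "A \<inter> B = {}" "C \<inter> B = {}" using h iff B(1) by blast+
    have "card (A \<union> B) < card (C \<union> B)" using h fA fB dA by (simp add: card_Un_disjoint)
    then obtain x where x: "x \<in> (C \<union> B) - (A \<union> B)" "indep P (insert x (A \<union> B))"
      using m_aug[OF m, of "A \<union> B" "C \<union> B"] h iff by blast
    have "x \<in> C - A" using x by blast
    moreover have "indep (contr P S) (insert x A)" using iff h x by auto
    ultimately show "\<exists>x\<in>C - A. indep (contr P S) (insert x A)" by blast
  qed
  ultimately show ?thesis unfolding matroid_def by (intro conjI) assumption+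
qed

lemma rk_contr: assumes m: "matroid P" and S: "S \<subseteq> ground P" and Y: "Y \<subseteq> ground P - S"
  shows "rk (contr P S) Y = rk P (Y \<union> S) - rk P S"
proof (rule antisym)
  have mc: "matroid (contr P S)" using matroid_contr[OF m S] .
  obtain Y' where Y': "Y' \<subseteq> Y" "indep (contr P S) Y'" "card Y' = rk (contr P S) Y" using rk_witness[OF mc] by blast
  have "rk P (Y' \<union> S) = card Y' + rk P S" using Y' indep_contr by blast
  moreover have "rk P (Y' \<union> S) \<le> rk P (Y \<union> S)" using Y'(1) by (intro rk_mono[OF m]) blast
  ultimately show "rk (contr P S) Y \<le> rk P (Y \<union> S) - rk P S" using Y' by linarith
next
  have mc: "matroid (contr P S)" using matroid_contr[OF m S] .
  obtain B where B: "B \<subseteq> S" "indep P B" "card B = rk P S" using rk_witness[OF m] by blast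
  obtain J where J: "B \<subseteq> J" "J \<subseteq> Y \<union> B" "indep P J" "card J = rk P (Y \<union> B)"
    using rk_extend[OF m B(2), of "Y \<union> B"] by blast
  let ?Y = "J - B"
  have JY: "J = ?Y \<union> B" using J by blast
  have "indep P (?Y \<union> B)" using J JY by simp
  hence ic: "indep (contr P S) ?Y" unfolding indep_contr using contr_alt[OF m B, of ?Y] Y J by blast
  have fJ: "finite J" using m_finite[OF m J(3)] .
  have "card ?Y = card J - card B" using J fJ by (simp add: card_Diff_subset finite_subset)
  hence "card ?Y = rk P (Y \<union> S) - rk P S" using J B rk_basis_union[OF m B, of Y] by simp
  moreover have "?Y \<subseteq> Y" using J by blast
  hence "card ?Y \<le> rk (contr P S) Y" using rk_ge[OF mc _ ic] by simp
  ultimately show "rk P (Y \<union> S) - rk P S \<le> rk (contr P S) Y" by simp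
qed

lemma fp_restr_contr:
  assumes m: "matroid P" and S: "S \<subseteq> ground P"
  shows "ground (free_product (restr P S) (contr P S)) = ground P"
    and "indep (free_product (restr P S) (contr P S)) X \<longleftrightarrow>
         X \<subseteq> ground P \<and> indep P (X \<inter> S) \<and> card X \<le> rk P (X \<union> S)"
proof -
  show "ground (free_product (restr P S) (contr P S)) = ground P" using S by auto
  show "indep (free_product (restr P S) (contr P S)) X \<longleftrightarrow>
         X \<subseteq> ground P \<and> indep P (X \<inter> S) \<and> card X \<le> rk P (X \<union> S)"
  proof (cases "X \<subseteq> ground P \<and> indep P (X \<inter> S)")
    case False
    thus ?thesis using S by (auto simp: indep_fp)
  next
    case True
    hence X: "X \<subseteq> ground P" and iX: "indep P (X \<inter> S)" by auto
    have fX: "finite X" using m_fin[OF m] X finite_subset by blast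
    have e1: "X \<inter> ground (contr P S) = X - S" using X by auto
    have rl: "ranklack (restr P S) (X \<inter> S) = rk P S - card (X \<inter> S)"
      unfolding ranklack_def using rk_restr[of S S P] rk_restr[of "X \<inter> S" S P] rk_indep[OF m iX] by simp
    have "(X - S) \<union> S = X \<union> S" by blast
    moreover have "X - S \<subseteq> ground P - S" using X by blast
    ultimately have nl: "nullity (contr P S) (X - S) = card (X - S) - (rk P (X \<union> S) - rk P S)"
      unfolding nullity_def using rk_contr[OF m S] by metis
    have a1: "card (X \<inter> S) \<le> rk P S" using rk_ge[OF m _ iX] by simp
    have a2: "rk P S \<le> rk P (X \<union> S)" by (rule rk_mono[OF m]) blast
    have "finite (X - S)" using fX by simp
    hence "rk P (S \<union> (X - S)) \<le> rk P S + card (X - S)" by (rule rk_subadd[OF m])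
    moreover have "S \<union> (X - S) = X \<union> S" by blast
    ultimately have a3: "rk P (X \<union> S) \<le> rk P S + card (X - S)" by simp
    have a4: "card X = card (X \<inter> S) + card (X - S)" using fX card_Int_Diff by blast
    have "indep (free_product (restr P S) (contr P S)) X \<longleftrightarrow>
         card (X - S) - (rk P (X \<union> S) - rk P S) \<le> rk P S - card (X \<inter> S)"
      using X iX S e1 rl nl by (auto simp: indep_fp)
    also have "\<dots> \<longleftrightarrow> card X \<le> rk P (X \<union> S)" using a1 a2 a3 a4 by linarith
    finally show ?thesis using X iX by simp
  qed
qed

lemma good_fp:
  assumes m: "matroid P" and S: "S \<subseteq> ground P" and g: "goodin P (ground P) S"
  shows "free_product (restr P S) (contr P S) = P"
proof (rule matroid_eqI)
  show "ground (free_product (restr P S) (contr P S)) = ground P" using fp_restr_contr[OF m S] by simp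
  fix X
  show "indep (free_product (restr P S) (contr P S)) X \<longleftrightarrow> indep P X"
  proof
    assume "indep (free_product (restr P S) (contr P S)) X"
    thus "indep P X" using g unfolding fp_restr_contr[OF m S] goodin_def by blast
  next
    assume i: "indep P X"
    have "card X \<le> rk P (X \<union> S)" using rk_ge[OF m _ i] by simp
    thus "indep (free_product (restr P S) (contr P S)) X"
      unfolding fp_restr_contr[OF m S] using i m_ground[OF m i] m_sub[OF m i] by blast
  qed
qed

lemma fp_empty: fixes B :: "'a matroid" assumes m: "matroid B" shows "free_product B empty_matroid = B"
proof (rule matroid_eqI)
  have ge: "ground (empty_matroid :: 'a matroid) = {}" by (simp add: empty_matroid_def ground_def)
  show "ground (free_product B empty_matroid) = ground B" unfolding ground_fp ge by simp
  fix A
  have "nullity (empty_matroid :: 'a matroid) {} = 0" by (simp add: nullity_def)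
  thus "indep (free_product B empty_matroid) A \<longleftrightarrow> indep B A"
    using ge m_ground[OF m] by (auto simp: indep_fp Int_absorb2)
qed

lemma fp_decomp:
  assumes m: "matroid P" and P: "P = free_product A Q" and mA: "matroid A"
    and d: "ground A \<inter> ground Q = {}" and e: "indep Q {}" and gQ: "\<And>Y. indep Q Y \<Longrightarrow> Y \<subseteq> ground Q"
  shows "restr P (ground A) = A" "contr P (ground A) = Q" "goodin P (ground P) (ground A)"
proof -
  let ?S = "ground A"
  have G: "ground P = ?S \<union> ground Q" using P by simp
  have S: "?S \<subseteq> ground P" using G by blast
  have n0: "nullity Q {} = 0" by (simp add: nullity_def)
  have iPS: "X \<subseteq> ?S \<Longrightarrow> indep P X \<longleftrightarrow> indep A X" for X
  proof -
    assume X: "X \<subseteq> ?S"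
    hence "X \<inter> ground Q = {}" using d by blast
    moreover have "X \<inter> ?S = X" using X by blast
    ultimately show ?thesis using P n0 X by (auto simp add: indep_fp)
  qed
  show r: "restr P ?S = A"
  proof (rule matroid_eqI)
    show "ground (restr P ?S) = ground A" by simp
    fix X show "indep (restr P ?S) X \<longleftrightarrow> indep A X"
      using iPS[of X] m_ground[OF mA, of X] by auto
  qed
  have rS: "rk P ?S = rk A ?S" using rk_restr[of ?S ?S P] r by simp
  have fQ: "finite (ground Q)" using m_fin[OF m] G by simp
  have key: "Y \<subseteq> ground Q \<Longrightarrow> rk P (Y \<union> ?S) = card Y + rk P ?S \<longleftrightarrow> indep Q Y" for Y
  proof -
    assume Y: "Y \<subseteq> ground Q"
    have fY: "finite Y" using fQ Y finite_subset by blast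
    have YS: "Y \<inter> ?S = {}" using Y d by blast
    obtain B where B: "B \<subseteq> ?S" "indep P B" "card B = rk P ?S" using rk_witness[OF m] by blast
    have iAB: "indep A B" using iPS B by blast
    have rkAB: "rk A B = card B" using rk_indep[OF mA iAB] .
    show ?thesis
    proof
      assume h: "rk P (Y \<union> ?S) = card Y + rk P ?S"
      obtain J where J: "J \<subseteq> Y \<union> ?S" "indep P J" "card J = rk P (Y \<union> ?S)" using rk_witness[OF m] by blast
      have fJ: "finite J" using m_finite[OF m J(2)] .
      have iJS: "indep P (J \<inter> ?S)" using m_sub[OF m J(2)] by blast
      have c1: "card (J \<inter> ?S) \<le> rk P ?S" using rk_ge[OF m _ iJS] by simp
      have JmS: "J - ?S \<subseteq> Y" using J by blast
      have c2: "card (J - ?S) \<le> card Y" using card_mono[OF fY JmS] .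
      have c3: "card J = card (J \<inter> ?S) + card (J - ?S)" using fJ card_Int_Diff by blast
      have eq1: "card (J \<inter> ?S) = rk P ?S" using c1 c2 c3 h J(3) by linarith
      have eq2: "J - ?S = Y" using card_seteq[OF fY JmS] c1 c2 c3 h J(3) by linarith
      have JQ: "J \<inter> ground Q = Y" using eq2 J Y d by blast
      have "nullity Q (J \<inter> ground Q) \<le> ranklack A (J \<inter> ?S)" using J(2) P by (simp add: indep_fp)
      moreover have "ranklack A (J \<inter> ?S) = 0"
        unfolding ranklack_def using rk_indep[OF mA, of "J \<inter> ?S"] iPS[of "J \<inter> ?S"] iJS eq1 rS by simp
      ultimately have "nullity Q Y = 0" using JQ by simp
      hence ge: "card Y \<le> rk Q Y" by (simp add: nullity_def)
      have fin: "finite (card ` {B. B \<subseteq> Y \<and> indep Q B})" using fY by simp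
      have ne: "card ` {B. B \<subseteq> Y \<and> indep Q B} \<noteq> {}" using e by blast
      obtain C where C: "C \<subseteq> Y" "indep Q C" "card C = rk Q Y"
        using Max_in[OF fin ne] unfolding rk_def by force
      have "C = Y" using card_seteq[OF fY C(1)] C ge by simp
      thus "indep Q Y" using C by simp
    next
      assume iY: "indep Q Y"
      have fin: "finite (card ` {B. B \<subseteq> Y \<and> indep Q B})" using fY by simp
      have "card Y \<le> rk Q Y" unfolding rk_def using iY by (intro Max_ge[OF fin]) auto
      hence nY: "nullity Q Y = 0" by (simp add: nullity_def)
      have "(Y \<union> B) \<inter> ?S = B" using B YS by blast
      moreover have "(Y \<union> B) \<inter> ground Q = Y" using B Y d by blast
      moreover have "ranklack A B = 0" unfolding ranklack_def using rkAB B(3) rS by simp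
      ultimately have "indep P (Y \<union> B)" using P iAB nY Y B by (auto simp: indep_fp)
      moreover have "Y \<union> B \<subseteq> Y \<union> ?S" using B(1) by blast
      ultimately have "card (Y \<union> B) \<le> rk P (Y \<union> ?S)" using rk_ge[OF m] by simp
      moreover have "card (Y \<union> B) = card Y + card B" using fY m_finite[OF m B(2)] YS B
        by (intro card_Un_disjoint) auto
      moreover have "rk P (?S \<union> Y) \<le> rk P ?S + card Y" by (rule rk_subadd[OF m fY])
      ultimately show "rk P (Y \<union> ?S) = card Y + rk P ?S" using B(3) by (simp add: Un_commute)
    qed
  qed
  have GQ: "ground P - ?S = ground Q" using G d by blast
  show c: "contr P ?S = Q"
  proof (rule matroid_eqI)
    show "ground (contr P ?S) = ground Q" using GQ by simp
    fix Y show "indep (contr P ?S) Y \<longleftrightarrow> indep Q Y"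
      unfolding indep_contr GQ using key gQ by blast
  qed
  have "free_product (restr P ?S) (contr P ?S) = P" using r c P by simp
  hence "indep P X \<longleftrightarrow> X \<subseteq> ground P \<and> indep P (X \<inter> ?S) \<and> card X \<le> rk P (X \<union> ?S)" for X
    using fp_restr_contr(2)[OF m S, of X] by simp
  then show "goodin P (ground P) (ground A)"
    unfolding goodin_def by blast
qed

lemma irred_prime:
  assumes m: "matroid P" and S: "S \<subseteq> ground P" and irr: "irreducible_matroid (restr P S)"
  shows "primeset P S"
  unfolding primeset_def
proof (intro allI impI)
  fix U assume U: "U \<subseteq> S" and g: "goodin P S U"
  let ?R = "restr P S"
  have mR: "matroid ?R" using matroid_restr[OF m S] .
  have gR: "goodin ?R (ground ?R) U"
    unfolding goodin_def
  proof (intro allI impI)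
    fix X assume X: "X \<subseteq> ground ?R" and i: "indep ?R (X \<inter> U)" and c: "card X \<le> rk ?R (X \<union> U)"
    have "X \<union> U \<subseteq> S" using X U by simp
    hence "card X \<le> rk P (X \<union> U)" using c rk_restr[of "X \<union> U" S P] by simp
    hence "indep P X" using g X i unfolding goodin_def by simp
    thus "indep ?R X" using X by simp
  qed
  have UR: "U \<subseteq> ground ?R" using U by simp
  have eq: "free_product (restr ?R U) (contr ?R U) = ?R" using good_fp[OF mR UR gR] .
  have m1: "matroid (restr ?R U)" using matroid_restr[OF mR UR] .
  have m2: "matroid (contr ?R U)" using matroid_contr[OF mR UR] .
  have fl: "free_product_list [restr ?R U, contr ?R U] = ?R"
    using eq fp_empty[OF m2] by (simp add: free_product_list_def)
  have pd: "pairwise_disjoint_grounds [restr ?R U, contr ?R U]"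
    unfolding pairwise_disjoint_grounds_def
  proof (intro allI impI)
    fix i j assume "i < length [restr ?R U, contr ?R U]" "j < length [restr ?R U, contr ?R U]" "i \<noteq> j"
    hence "(i = 0 \<and> j = 1) \<or> (i = 1 \<and> j = 0)" by auto
    thus "ground ([restr ?R U, contr ?R U] ! i) \<inter> ground ([restr ?R U, contr ?R U] ! j) = {}" by auto
  qed
  have all: "\<forall>N\<in>set [restr ?R U, contr ?R U]. matroid N" using m1 m2 by simp
  have "\<forall>Ms. (\<forall>N\<in>set Ms. matroid N) \<and> pairwise_disjoint_grounds Ms \<and>
            free_product_list Ms = ?R \<longrightarrow> ?R \<in> set Ms" using irr unfolding irreducible_matroid_def by blast
  hence "?R \<in> set [restr ?R U, contr ?R U]" using all pd fl by blast
  hence "?R = restr ?R U \<or> ?R = contr ?R U" by simp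
  hence "ground ?R = ground (restr ?R U) \<or> ground ?R = ground (contr ?R U)" by metis
  hence "S = U \<or> S = S - U" by simp
  thus "U = {} \<or> U = S" using U by blast
qed

definition isov :: "('a \<Rightarrow> 'b) \<Rightarrow> 'a matroid \<Rightarrow> 'b matroid \<Rightarrow> bool" where
  "isov f M N \<longleftrightarrow> bij_betw f (ground M) (ground N) \<and> (\<forall>A\<subseteq>ground M. indep M A \<longleftrightarrow> indep N (f ` A))"

lemma iso_isov: "matroid_iso M N \<longleftrightarrow> (\<exists>f. isov f M N)"
  by (simp add: matroid_iso_def isov_def)

lemma isov_bij: "isov f M N \<Longrightarrow> bij_betw f (ground M) (ground N)" by (simp add: isov_def)
lemma isov_indep: "isov f M N \<Longrightarrow> A \<subseteq> ground M \<Longrightarrow> indep M A \<longleftrightarrow> indep N (f ` A)" by (simp add: isov_def)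

lemma isov_sym: assumes i: "isov f M N" shows "isov (inv_into (ground M) f) N M"
proof -
  let ?g = "inv_into (ground M) f"
  have b: "bij_betw f (ground M) (ground N)" using isov_bij[OF i] .
  have bg: "bij_betw ?g (ground N) (ground M)" using bij_betw_inv_into[OF b] .
  have sur: "f ` ground M = ground N" using bij_betw_imp_surj_on[OF b] .
  have "indep N B \<longleftrightarrow> indep M (?g ` B)" if B: "B \<subseteq> ground N" for B
  proof -
    have "?g ` B \<subseteq> ground M" using bij_betw_imp_surj_on[OF bg] B by blast
    hence "indep M (?g ` B) \<longleftrightarrow> indep N (f ` ?g ` B)" using isov_indep[OF i] by blast
    moreover have "f ` ?g ` B = B" using image_inv_into_cancel[OF sur B] .
    ultimately show ?thesis by simp
  qed
  thus ?thesis using bg by (simp add: isov_def)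
qed

lemma isov_trans: assumes i: "isov f M N" and j: "isov g N K" shows "isov (g \<circ> f) M K"
proof -
  have b: "bij_betw (g \<circ> f) (ground M) (ground K)" using bij_betw_trans[OF isov_bij[OF i] isov_bij[OF j]] .
  have "indep M A \<longleftrightarrow> indep K ((g \<circ> f) ` A)" if A: "A \<subseteq> ground M" for A
  proof -
    have "f ` A \<subseteq> ground N" using bij_betw_imp_surj_on[OF isov_bij[OF i]] A by blast
    thus ?thesis using isov_indep[OF i A] isov_indep[OF j] by (simp add: image_comp)
  qed
  thus ?thesis using b by (simp add: isov_def)
qed

lemma iso_sym: "matroid_iso M N \<Longrightarrow> matroid_iso N M"
  using isov_sym iso_isov by metis
lemma iso_trans: "matroid_iso M N \<Longrightarrow> matroid_iso N K \<Longrightarrow> matroid_iso M K"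
  using isov_trans iso_isov by metis
lemma iso_refl: "matroid_iso M M"
proof -
  have "isov id M M" by (simp add: isov_def)
  thus ?thesis using iso_isov by blast
qed

lemma isov_rk: assumes i: "isov f M N" and X: "X \<subseteq> ground M" shows "rk N (f ` X) = rk M X"
proof -
  have inj: "inj_on f (ground M)" using isov_bij[OF i] by (simp add: bij_betw_def)
  have "card ` {B. B \<subseteq> f ` X \<and> indep N B} = card ` {B. B \<subseteq> X \<and> indep M B}"
  proof (rule set_eqI, rule iffI)
    fix c assume "c \<in> card ` {B. B \<subseteq> f ` X \<and> indep N B}"
    then obtain B where B: "B \<subseteq> f ` X" "indep N B" "c = card B" by blast
    let ?B0 = "X \<inter> f -` B"
    have fB: "f ` ?B0 = B" using B(1) by blast
    have sub: "?B0 \<subseteq> ground M" using X by blast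
    have "indep M ?B0" using isov_indep[OF i sub] fB B(2) by simp
    moreover have "card ?B0 = c" using card_image[OF inj_on_subset[OF inj sub]] fB B(3) by simp
    ultimately show "c \<in> card ` {B. B \<subseteq> X \<and> indep M B}" by blast
  next
    fix c assume "c \<in> card ` {B. B \<subseteq> X \<and> indep M B}"
    then obtain B where B: "B \<subseteq> X" "indep M B" "c = card B" by blast
    have sub: "B \<subseteq> ground M" using X B by blast
    have "indep N (f ` B)" using isov_indep[OF i sub] B(2) by simp
    moreover have "card (f ` B) = c" using card_image[OF inj_on_subset[OF inj sub]] B(3) by simp
    moreover have "f ` B \<subseteq> f ` X" using B(1) by blast
    ultimately show "c \<in> card ` {B. B \<subseteq> f ` X \<and> indep N B}" by blast
  qed
  thus ?thesis by (simp add: rk_def)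
qed

lemma isov_restr: assumes i: "isov f P Q" and T: "T \<subseteq> ground P"
  shows "isov f (restr P T) (restr Q (f ` T))"
proof -
  have b: "bij_betw f T (f ` T)" using bij_betw_subset[OF isov_bij[OF i] T] by simp
  have "indep (restr P T) A \<longleftrightarrow> indep (restr Q (f ` T)) (f ` A)" if A: "A \<subseteq> T" for A
    using A T isov_indep[OF i, of A] by auto
  thus ?thesis using b by (simp add: isov_def)
qed

lemma isov_contr: assumes i: "isov f P Q" and T: "T \<subseteq> ground P"
  shows "isov f (contr P T) (contr Q (f ` T))"
proof -
  have bb: "bij_betw f (ground P) (ground Q)" using isov_bij[OF i] .
  have inj: "inj_on f (ground P)" using bb by (simp add: bij_betw_def)
  have sur: "f ` ground P = ground Q" using bij_betw_imp_surj_on[OF bb] .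
  have im: "f ` (ground P - T) = ground Q - f ` T"
    using inj_on_image_set_diff[OF inj, of "ground P" T] T sur by simp
  have b: "bij_betw f (ground P - T) (ground Q - f ` T)" using bij_betw_subset[OF bb _ im] by blast
  have "indep (contr P T) A \<longleftrightarrow> indep (contr Q (f ` T)) (f ` A)" if A: "A \<subseteq> ground P - T" for A
  proof -
    have AT: "A \<union> T \<subseteq> ground P" using A T by blast
    have r1: "rk Q (f ` A \<union> f ` T) = rk P (A \<union> T)" using isov_rk[OF i AT] by (simp add: image_Un)
    have r2: "rk Q (f ` T) = rk P T" using isov_rk[OF i T] .
    have c: "card (f ` A) = card A" using card_image[OF inj_on_subset[OF inj]] A by blast
    have s: "f ` A \<subseteq> ground Q - f ` T" using A im by blast
    show ?thesis unfolding indep_contr using A s r1 r2 c by simp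
  qed
  thus ?thesis using b by (simp add: isov_def)
qed

lemma isov_good: assumes i: "isov f M N" and W: "W \<subseteq> ground M" and Z: "Z \<subseteq> W" and g: "goodin M W Z"
  shows "goodin N (f ` W) (f ` Z)"
  unfolding goodin_def
proof (intro allI impI)
  fix X assume X: "X \<subseteq> f ` W" and iX: "indep N (X \<inter> f ` Z)" and cX: "card X \<le> rk N (X \<union> f ` Z)"
  have inj: "inj_on f (ground M)" using isov_bij[OF i] by (simp add: bij_betw_def)
  let ?X = "W \<inter> f -` X"
  have fX: "f ` ?X = X" using X by blast
  have sX: "?X \<subseteq> ground M" using W by blast
  have sZ: "Z \<subseteq> ground M" using W Z by blast
  have e1: "f ` (?X \<inter> Z) = X \<inter> f ` Z" using inj_on_image_Int[OF inj sX sZ] fX by simp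
  have e2: "f ` (?X \<union> Z) = X \<union> f ` Z" using fX by (simp add: image_Un)
  have s1: "?X \<inter> Z \<subseteq> ground M" using sX by blast
  have s2: "?X \<union> Z \<subseteq> ground M" using sX sZ by blast
  have "indep M (?X \<inter> Z)" using isov_indep[OF i s1] e1 iX by simp
  moreover have "card ?X \<le> rk M (?X \<union> Z)"
    using isov_rk[OF i s2] e2 cX card_image[OF inj_on_subset[OF inj sX]] fX by simp
  moreover have "?X \<subseteq> W" by blast
  ultimately have "indep M ?X" using g unfolding goodin_def by blast
  thus "indep N X" using isov_indep[OF i sX] fX by simp
qed

lemma isov_prime: assumes i: "isov f M N" and S: "S \<subseteq> ground M" and p: "primeset M S"
  shows "primeset N (f ` S)"
  unfolding primeset_def
proof (intro allI impI)
  fix U assume U: "U \<subseteq> f ` S" and g: "goodin N (f ` S) U"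
  let ?g = "inv_into (ground M) f"
  have j: "isov ?g N M" using isov_sym[OF i] .
  have bb: "bij_betw f (ground M) (ground N)" using isov_bij[OF i] .
  have inj: "inj_on f (ground M)" using bb by (simp add: bij_betw_def)
  have sur: "f ` ground M = ground N" using bij_betw_imp_surj_on[OF bb] .
  have fS: "f ` S \<subseteq> ground N" using S sur by blast
  have "goodin M (?g ` f ` S) (?g ` U)" using isov_good[OF j fS U g] .
  moreover have gfS: "?g ` f ` S = S" using inv_into_image_cancel[OF inj S] .
  ultimately have gU: "goodin M S (?g ` U)" by simp
  have "?g ` U \<subseteq> S" using U gfS by blast
  hence "?g ` U = {} \<or> ?g ` U = S" using p gU unfolding primeset_def by blast
  moreover have UN: "U \<subseteq> ground N" using U fS by (rule subset_trans)
  have fgU: "f ` ?g ` U = U" using image_inv_into_cancel[OF sur UN] .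
  show "U = {} \<or> U = f ` S" using \<open>?g ` U = {} \<or> ?g ` U = S\<close>
  proof
    assume "?g ` U = {}" thus ?thesis using fgU by simp
  next
    assume "?g ` U = S" hence "f ` ?g ` U = f ` S" by simp
    thus ?thesis using fgU by simp
  qed
qed

lemma isov_matroid: assumes m: "matroid M" and i: "isov f M N" and gN: "\<And>B. indep N B \<Longrightarrow> B \<subseteq> ground N"
  shows "matroid N"
proof -
  let ?g = "inv_into (ground M) f"
  have j: "isov ?g N M" using isov_sym[OF i] .
  have bg: "bij_betw ?g (ground N) (ground M)" using isov_bij[OF j] .
  have injg: "inj_on ?g (ground N)" using bg by (simp add: bij_betw_def)
  have surg: "?g ` ground N = ground M" using bij_betw_imp_surj_on[OF bg] .
  have iff: "indep N B \<longleftrightarrow> B \<subseteq> ground N \<and> indep M (?g ` B)" for B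
    using isov_indep[OF j, of B] gN by blast
  have a1: "finite (ground N)" using m_fin[OF m] isov_bij[OF i] bij_betw_finite by blast
  have a2: "indep N {}" using iff m_empty[OF m] by simp
  have a3: "\<forall>A. indep N A \<longrightarrow> A \<subseteq> ground N" using gN by blast
  have a4: "\<forall>A B. indep N A \<and> B \<subseteq> A \<longrightarrow> indep N B"
  proof (intro allI impI)
    fix A B assume h: "indep N A \<and> B \<subseteq> A"
    hence "indep M (?g ` B)" using iff m_sub[OF m, of "?g ` A" "?g ` B"] by blast
    thus "indep N B" using iff h by blast
  qed
  have a5: "\<forall>A B. indep N A \<and> indep N B \<and> card A < card B \<longrightarrow> (\<exists>x\<in>B - A. indep N (insert x A))"
  proof (intro allI impI)
    fix A B assume h: "indep N A \<and> indep N B \<and> card A < card B"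
    have sA: "A \<subseteq> ground N" and sB: "B \<subseteq> ground N" using h gN by blast+
    have cA: "card (?g ` A) = card A" using card_image[OF inj_on_subset[OF injg sA]] .
    have cB: "card (?g ` B) = card B" using card_image[OF inj_on_subset[OF injg sB]] .
    obtain x where x: "x \<in> ?g ` B - ?g ` A" "indep M (insert x (?g ` A))"
      using m_aug[OF m, of "?g ` A" "?g ` B"] h iff cA cB by auto
    obtain b where b: "b \<in> B" "x = ?g b" using x by blast
    have "b \<notin> A" using x b by blast
    moreover have "?g ` insert b A = insert x (?g ` A)" using b by simp
    moreover have "insert b A \<subseteq> ground N" using sA sB b by blast
    ultimately have "indep N (insert b A)" "b \<in> B - A" using iff x b by auto
    thus "\<exists>x\<in>B - A. indep N (insert x A)" by blast
  qed
  show ?thesis unfolding matroid_def using a1 a2 a3 a4 a5 by (intro conjI) assumption+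
qed

lemma good_inter:
  assumes m: "matroid P" and g: "goodin P (ground P) A" and B: "B \<subseteq> ground P"
  shows "goodin P B (A \<inter> B)"
  unfolding goodin_def
proof (intro allI impI)
  fix X assume X: "X \<subseteq> B" and i: "indep P (X \<inter> (A \<inter> B))" and c: "card X \<le> rk P (X \<union> (A \<inter> B))"
  have e: "X \<inter> (A \<inter> B) = X \<inter> A" using X by blast
  have "X \<union> (A \<inter> B) \<subseteq> X \<union> A" by blast
  hence "rk P (X \<union> (A \<inter> B)) \<le> rk P (X \<union> A)" by (rule rk_mono[OF m])
  hence "card X \<le> rk P (X \<union> A)" using c by simp
  moreover have "X \<subseteq> ground P" using X B by (rule subset_trans)
  ultimately show "indep P X" using g i e unfolding goodin_def by simp
qed

lemma rank_formula:
  assumes m: "matroid P" and S: "S \<subseteq> ground P" and g: "goodin P (ground P) S" and X: "X \<subseteq> ground P"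
  shows "min (rk P (X \<union> S)) (rk P (X \<inter> S) + card (X - S)) \<le> rk P X"
proof -
  have fX: "finite X" using m_fin[OF m] X by (rule finite_subset[rotated])
  obtain I where I: "I \<subseteq> X \<inter> S" "indep P I" "card I = rk P (X \<inter> S)" using rk_witness[OF m] by blast
  have IS: "I \<subseteq> S" using I(1) by blast
  obtain B where B: "I \<subseteq> B" "B \<subseteq> S" "indep P B" "card B = rk P S" using rk_extend[OF m I(2) IS] by blast
  have BXS: "B \<subseteq> X \<union> S" using B(2) by blast
  obtain J where J: "B \<subseteq> J" "J \<subseteq> X \<union> S" "indep P J" "card J = rk P (X \<union> S)"
    using rk_extend[OF m B(3) BXS] by blast
  have fJ: "finite J" using m_finite[OF m J(3)] .
  have iJS: "indep P (J \<inter> S)" using m_sub[OF m J(3)] by blast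
  have "card (J \<inter> S) \<le> rk P S" using rk_ge[OF m _ iJS] by simp
  moreover have "B \<subseteq> J \<inter> S" using J B by blast
  moreover have "finite (J \<inter> S)" using fJ by simp
  ultimately have JS: "J \<inter> S = B" using card_seteq[of "J \<inter> S" B] B(4) by simp
  let ?K = "J - S"
  have JKB: "J = ?K \<union> B" using JS by blast
  have KX: "?K \<subseteq> X - S" using J by blast
  have cJ: "card J = card ?K + card B" using fJ JS card_Int_Diff[OF fJ, of S] by simp
  let ?m = "min (rk P (X \<union> S)) (rk P (X \<inter> S) + card (X - S))"
  have r1: "rk P (X \<inter> S) \<le> rk P S" by (rule rk_mono[OF m]) blast
  have fXS: "finite (X - S)" using fX by simp
  have cK: "card ?K \<le> card (X - S)" using card_mono[OF fXS KX] .
  have le1: "card I + card ?K \<le> ?m" using I(3) B(4) J(4) cJ r1 cK by simp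
  have cD: "card ((X - S) - ?K) = card (X - S) - card ?K" using card_Diff_subset[OF finite_subset[OF KX fXS] KX] .
  have "?m - card I - card ?K \<le> card ((X - S) - ?K)" using cD I(3) cK by simp
  then obtain E where E: "E \<subseteq> (X - S) - ?K" "card E = ?m - card I - card ?K" "finite E"
    using obtain_subset_with_card_n by blast
  let ?Z = "I \<union> ?K \<union> E"
  have fI: "finite I" using m_finite[OF m I(2)] .
  have fK: "finite ?K" using fJ by simp
  have d1: "I \<inter> ?K = {}" using IS by blast
  have d2: "(I \<union> ?K) \<inter> E = {}" using IS E(1) by blast
  have cZ: "card ?Z = ?m"
  proof -
    have "card ?Z = card (I \<union> ?K) + card E" using d2 fI fK E(3) by (intro card_Un_disjoint) auto
    also have "card (I \<union> ?K) = card I + card ?K" using d1 fI fK by (intro card_Un_disjoint) auto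
    finally show ?thesis using E(2) le1 by simp
  qed
  have ZX: "?Z \<subseteq> X" using I(1) KX E(1) by blast
  have ZS: "?Z \<inter> S = I" using I(1) E(1) by blast
  have "J \<subseteq> ?Z \<union> S" using JKB B(2) by blast
  hence "card J \<le> rk P (?Z \<union> S)" using rk_ge[OF m _ J(3)] by simp
  hence "card ?Z \<le> rk P (?Z \<union> S)" using cZ J(4) by simp
  moreover have "?Z \<subseteq> ground P" using ZX X by (rule subset_trans)
  ultimately have "indep P ?Z" using g ZS I(2) unfolding goodin_def by simp
  hence "card ?Z \<le> rk P X" using rk_ge[OF m ZX] by simp
  thus ?thesis using cZ by simp
qed

lemma uniform_part:
  assumes m: "matroid P" and S: "S \<subseteq> ground P" and T: "T \<subseteq> ground P" and d: "S \<inter> T = {}"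
    and Tne: "T \<noteq> {}" and gS: "goodin P (ground P) S" and gT: "goodin P (ground P) T" and X: "X \<subseteq> S"
  shows "min (rk P (S \<union> T)) (card X) \<le> rk P X"
proof -
  have XG: "X \<subseteq> ground P" using X S by (rule subset_trans)
  have XTG: "X \<union> T \<subseteq> ground P" using XG T by blast
  have h1: "min (rk P (X \<union> T)) (rk P (X \<inter> T) + card (X - T)) \<le> rk P X" using rank_formula[OF m T gT XG] .
  have "X \<inter> T = {}" using X d by blast
  moreover have "X - T = X" using X d by blast
  ultimately have h1': "min (rk P (X \<union> T)) (card X) \<le> rk P X" using h1 rk_empty[OF m] by simp
  have h2: "min (rk P ((X \<union> T) \<union> S)) (rk P ((X \<union> T) \<inter> S) + card ((X \<union> T) - S)) \<le> rk P (X \<union> T)"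
    using rank_formula[OF m S gS XTG] .
  have "(X \<union> T) \<union> S = S \<union> T" using X by blast
  moreover have "(X \<union> T) \<inter> S = X" using X d by blast
  moreover have "(X \<union> T) - S = T" using X d by blast
  ultimately have h2': "min (rk P (S \<union> T)) (rk P X + card T) \<le> rk P (X \<union> T)" using h2 by simp
  have fT: "finite T" using m_fin[OF m] T by (rule finite_subset[rotated])
  have cT: "card T \<ge> 1" using Tne fT by (simp add: Suc_le_eq card_gt_0_iff)
  show ?thesis using h1' h2' cT by (simp add: min_def split: if_splits)
qed

lemma singleton_part:
  assumes m: "matroid P" and S: "S \<subseteq> ground P" and T: "T \<subseteq> ground P" and d: "S \<inter> T = {}"
    and Sne: "S \<noteq> {}" and Tne: "T \<noteq> {}" and gS: "goodin P (ground P) S" and gT: "goodin P (ground P) T"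
    and p: "primeset P S"
  shows "\<exists>s. S = {s}"
proof -
  obtain s where s: "s \<in> S" using Sne by blast
  have "goodin P S {s}"
    unfolding goodin_def
  proof (intro allI impI)
    fix X assume X: "X \<subseteq> S" and i: "indep P (X \<inter> {s})" and c: "card X \<le> rk P (X \<union> {s})"
    have "X \<union> {s} \<subseteq> S \<union> T" using X s by blast
    hence "rk P (X \<union> {s}) \<le> rk P (S \<union> T)" by (rule rk_mono[OF m])
    hence "card X \<le> rk P (S \<union> T)" using c by simp
    hence "card X \<le> rk P X" using uniform_part[OF m S T d Tne gS gT X] by simp
    moreover have "finite X" using m_fin[OF m] X S by (meson finite_subset)
    ultimately show "indep P X" using indep_of_rk[OF m] by simp
  qed
  moreover have "{s} \<subseteq> S" using s by simp
  ultimately have "{s} = {} \<or> {s} = S" using p unfolding primeset_def by blast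
  thus ?thesis by blast
qed

lemma sym_rank:
  assumes m: "matroid P" and st: "s \<in> ground P" "t \<in> ground P" "s \<noteq> t" and gT: "goodin P (ground P) {t}"
    and Y: "Y \<subseteq> ground P - {s, t}"
  shows "rk P (insert s Y) = min (rk P (insert s (insert t Y))) (Suc (card Y))"
proof -
  have fY: "finite Y" using m_fin[OF m] Y by (meson Diff_subset finite_subset)
  have X: "insert s Y \<subseteq> ground P" using Y st by blast
  have T: "{t} \<subseteq> ground P" using st by simp
  have h: "min (rk P (insert s Y \<union> {t})) (rk P (insert s Y \<inter> {t}) + card (insert s Y - {t})) \<le> rk P (insert s Y)"
    using rank_formula[OF m T gT X] .
  have e1: "insert s Y \<union> {t} = insert s (insert t Y)" by blast
  have e2: "insert s Y \<inter> {t} = {}" using Y st by blast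
  have e3: "insert s Y - {t} = insert s Y" using Y st by blast
  have sY: "s \<notin> Y" using Y by blast
  have c: "card (insert s Y) = Suc (card Y)" using fY sY by simp
  have lo: "min (rk P (insert s (insert t Y))) (Suc (card Y)) \<le> rk P (insert s Y)"
    using h e1 e2 e3 c rk_empty[OF m] by simp
  have u1: "rk P (insert s Y) \<le> rk P (insert s (insert t Y))" by (rule rk_mono[OF m]) blast
  have u2: "rk P (insert s Y) \<le> Suc (card Y)" using rk_le_card[OF m, of "insert s Y"] fY c by simp
  show ?thesis using lo u1 u2 by simp
qed

lemma core:
  assumes m: "matroid P" and S: "S \<subseteq> ground P" and T: "T \<subseteq> ground P"
    and Sne: "S \<noteq> {}" and Tne: "T \<noteq> {}" and gS: "goodin P (ground P) S" and gT: "goodin P (ground P) T"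
    and pS: "primeset P S" and pT: "primeset P T"
  shows "matroid_iso (restr P S) (restr P T) \<and> matroid_iso (contr P S) (contr P T)"
proof -
  have a1: "goodin P S (T \<inter> S)" using good_inter[OF m gT S] .
  have a2: "goodin P T (S \<inter> T)" using good_inter[OF m gS T] .
  have "T \<inter> S = {} \<or> T \<inter> S = S" using pS a1 unfolding primeset_def by blast
  moreover have "S \<inter> T = {} \<or> S \<inter> T = T" using pT a2 unfolding primeset_def by blast
  ultimately have cases: "S = T \<or> S \<inter> T = {}" by blast
  show ?thesis
  proof (cases "S = T")
    case True thus ?thesis using iso_refl[of "restr P T"] iso_refl[of "contr P T"] by simp
  next
    case False
    hence d: "S \<inter> T = {}" using cases by simp
    have d': "T \<inter> S = {}" using d by blast
    obtain s where s: "S = {s}" using singleton_part[OF m S T d Sne Tne gS gT pS] by blast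
    obtain t where t: "T = {t}" using singleton_part[OF m T S d' Tne Sne gT gS pT] by blast
    have st: "s \<in> ground P" "t \<in> ground P" "s \<noteq> t" using s t S T d by auto
    have u1: "min (rk P (S \<union> T)) (card {s}) \<le> rk P {s}" using uniform_part[OF m S T d Tne gS gT, of "{s}"] s by simp
    have u2: "min (rk P (T \<union> S)) (card {t}) \<le> rk P {t}" using uniform_part[OF m T S d' Sne gT gS, of "{t}"] t by simp
    have l1: "rk P {s} \<le> 1" using rk_le_card[OF m, of "{s}"] by simp
    have l2: "rk P {t} \<le> 1" using rk_le_card[OF m, of "{t}"] by simp
    have l3: "rk P {s} \<le> rk P (S \<union> T)" using s by (intro rk_mono[OF m]) blast
    have l4: "rk P {t} \<le> rk P (S \<union> T)" using t by (intro rk_mono[OF m]) blast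
    have STc: "T \<union> S = S \<union> T" by blast
    have rst: "rk P {s} = rk P {t}" using u1 u2 l1 l2 l3 l4 STc by (simp add: min_def split: if_splits)
    have gt: "goodin P (ground P) {t}" using gT t by simp
    have gs: "goodin P (ground P) {s}" using gS s by simp
    have ts: "t \<noteq> s" using st by simp
    have swap: "rk P (insert s Y) = rk P (insert t Y)" if Y: "Y \<subseteq> ground P - {s, t}" for Y
    proof -
      have Y': "Y \<subseteq> ground P - {t, s}" using Y by blast
      have "rk P (insert s Y) = min (rk P (insert s (insert t Y))) (Suc (card Y))"
        using sym_rank[OF m st gt Y] .
      moreover have "rk P (insert t Y) = min (rk P (insert t (insert s Y))) (Suc (card Y))"
        using sym_rank[OF m st(2) st(1) ts gs Y'] .
      moreover have "insert t (insert s Y) = insert s (insert t Y)" by blast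
      ultimately show ?thesis by simp
    qed
    have indep1: "indep P {x} \<longleftrightarrow> 1 \<le> rk P {x}" for x
    proof
      assume "indep P {x}" thus "1 \<le> rk P {x}" using rk_indep[OF m] by simp
    next
      assume "1 \<le> rk P {x}" thus "indep P {x}" using indep_of_rk[OF m, of "{x}"] by simp
    qed
    have iR: "isov (\<lambda>x. t) (restr P S) (restr P T)"
      unfolding isov_def
    proof
      show "bij_betw (\<lambda>x. t) (ground (restr P S)) (ground (restr P T))"
        using s t by (simp add: bij_betw_def)
      show "\<forall>A\<subseteq>ground (restr P S). indep (restr P S) A = indep (restr P T) ((\<lambda>x. t) ` A)"
      proof (intro allI impI)
        fix A assume "A \<subseteq> ground (restr P S)"
        hence "A = {} \<or> A = {s}" using s by auto
        thus "indep (restr P S) A = indep (restr P T) ((\<lambda>x. t) ` A)"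
        proof
          assume "A = {}" thus ?thesis using s t by simp
        next
          assume A: "A = {s}"
          have "indep P {s} \<longleftrightarrow> indep P {t}" using indep1 rst by simp
          thus ?thesis using A s t by simp
        qed
      qed
    qed
    let ?f = "\<lambda>x. if x = t then s else x"
    have bij: "bij_betw ?f (ground P - {s}) (ground P - {t})"
    proof -
      have "inj_on ?f (ground P - {s})" unfolding inj_on_def by auto
      moreover have "?f ` (ground P - {s}) = ground P - {t}"
      proof
        show "?f ` (ground P - {s}) \<subseteq> ground P - {t}" using st by auto
      next
        show "ground P - {t} \<subseteq> ?f ` (ground P - {s})"
        proof
          fix y assume y: "y \<in> ground P - {t}"
          show "y \<in> ?f ` (ground P - {s})"
          proof (cases "y = s")
            case True
            hence "y = ?f t" by simp
            moreover have "t \<in> ground P - {s}" using st by simp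
            ultimately show ?thesis by blast
          next
            case False
            hence "y = ?f y" using y by simp
            moreover have "y \<in> ground P - {s}" using y False by simp
            ultimately show ?thesis by blast
          qed
        qed
      qed
      ultimately show ?thesis by (simp add: bij_betw_def)
    qed
    have injf: "inj_on ?f (ground P - {s})" using bij by (simp add: bij_betw_def)
    have iC: "isov ?f (contr P S) (contr P T)"
      unfolding isov_def
    proof
      show "bij_betw ?f (ground (contr P S)) (ground (contr P T))" using bij s t by simp
      show "\<forall>A\<subseteq>ground (contr P S). indep (contr P S) A = indep (contr P T) (?f ` A)"
      proof (intro allI impI)
        fix A assume A0: "A \<subseteq> ground (contr P S)"
        hence A: "A \<subseteq> ground P - {s}" using s by simp
        have cA: "card (?f ` A) = card A" using card_image[OF inj_on_subset[OF injf A]] .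
        have fA: "?f ` A \<subseteq> ground P - {t}" using A bij bij_betw_imp_surj_on by blast
        have rr: "rk P (A \<union> {s}) = rk P (?f ` A \<union> {t})"
        proof (cases "t \<in> A")
          case True
          let ?Y = "A - {t}"
          have AY: "A = insert t ?Y" using True by blast
          have "?f ` A = insert s ?Y" using True by auto
          hence "?f ` A \<union> {t} = A \<union> {s}" using True by blast
          thus ?thesis by simp
        next
          case False
          have "?f ` A = A" using False by auto
          moreover have "A \<subseteq> ground P - {s, t}" using A False by blast
          ultimately show ?thesis using swap[of A] by simp
        qed
        show "indep (contr P S) A = indep (contr P T) (?f ` A)"
          unfolding indep_contr using A fA cA rr rst s t by simp
      qed
    qed
    show ?thesis using iR iC iso_isov by blast
  qed
qed

lemma fpl_Nil: "free_product_list [] = empty_matroid" by (simp add: free_product_list_def)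
lemma fpl_Cons: "free_product_list (A # Ms) = free_product A (free_product_list Ms)"
  by (simp add: free_product_list_def)

lemma ground_empty[simp]: "ground empty_matroid = {}" by (simp add: empty_matroid_def ground_def)
lemma indep_empty_m: "indep empty_matroid Y \<longleftrightarrow> Y = {}" by (simp add: empty_matroid_def indep_def)

lemma fpl_ground: "ground (free_product_list Ms) = \<Union> (ground ` set Ms)"
  by (induction Ms) (simp_all add: fpl_Nil fpl_Cons)

lemma fpl_indep_ground: "indep (free_product_list Ms) Y \<Longrightarrow> Y \<subseteq> ground (free_product_list Ms)"
proof (cases Ms)
  case Nil
  assume "indep (free_product_list Ms) Y" thus ?thesis using Nil by (simp add: fpl_Nil indep_empty_m)
next
  case (Cons A Ms')
  assume "indep (free_product_list Ms) Y" thus ?thesis using Cons by (simp add: fpl_Cons indep_fp)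
qed

lemma fpl_indep_empty: "(\<forall>N\<in>set Ms. matroid N) \<Longrightarrow> indep (free_product_list Ms) {}"
proof (cases Ms)
  case Nil thus ?thesis by (simp add: fpl_Nil indep_empty_m)
next
  case (Cons A Ms')
  assume "\<forall>N\<in>set Ms. matroid N"
  hence "matroid A" using Cons by simp
  hence "indep A {}" by (rule m_empty)
  moreover have "nullity (free_product_list Ms') {} = 0" by (simp add: nullity_def)
  ultimately show ?thesis using Cons by (simp add: fpl_Cons indep_fp)
qed

lemma pdg_tail:
  assumes "pairwise_disjoint_grounds (A # Ms)"
  shows "pairwise_disjoint_grounds Ms" "ground A \<inter> ground (free_product_list Ms) = {}"
proof -
  have h: "\<And>i j. i < Suc (length Ms) \<Longrightarrow> j < Suc (length Ms) \<Longrightarrow> i \<noteq> j \<Longrightarrow>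
      ground ((A # Ms) ! i) \<inter> ground ((A # Ms) ! j) = {}"
    using assms unfolding pairwise_disjoint_grounds_def by simp
  show "pairwise_disjoint_grounds Ms"
    unfolding pairwise_disjoint_grounds_def
  proof (intro allI impI)
    fix i j assume "i < length Ms" "j < length Ms" "i \<noteq> j"
    thus "ground (Ms ! i) \<inter> ground (Ms ! j) = {}" using h[of "Suc i" "Suc j"] by simp
  qed
  have "ground A \<inter> ground N = {}" if N: "N \<in> set Ms" for N
  proof -
    obtain j where j: "j < length Ms" "Ms ! j = N" using N by (meson in_set_conv_nth)
    show ?thesis using h[of 0 "Suc j"] j by simp
  qed
  thus "ground A \<inter> ground (free_product_list Ms) = {}" unfolding fpl_ground by blast
qed

lemma irr_m: "irreducible_matroid X \<Longrightarrow> matroid X" by (simp add: irreducible_matroid_def)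
lemma irr_ne: "irreducible_matroid X \<Longrightarrow> ground X \<noteq> {}" by (simp add: irreducible_matroid_def)
lemma isov_iso: "isov f M N \<Longrightarrow> matroid_iso M N" using iso_isov by blast

lemma main_ind:
  fixes Ms :: "'b matroid list" and Ns :: "'c matroid list"
  assumes "\<forall>X\<in>set Ms. irreducible_matroid X" and "\<forall>Y\<in>set Ns. irreducible_matroid Y"
    and "pairwise_disjoint_grounds Ms" and "pairwise_disjoint_grounds Ns"
    and "matroid (free_product_list Ms)" and "matroid (free_product_list Ns)"
    and "matroid_iso (free_product_list Ms) (free_product_list Ns)"
  shows "length Ms = length Ns \<and> (\<forall>i<length Ms. matroid_iso (Ms ! i) (Ns ! i))"
  using assms
proof (induction Ms arbitrary: Ns)
  case Nil
  obtain f where f: "isov f (free_product_list ([] :: 'b matroid list)) (free_product_list Ns)"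
    using Nil.prems(7) unfolding iso_isov by blast
  have "f ` ground (free_product_list ([] :: 'b matroid list)) = ground (free_product_list Ns)"
    by (rule bij_betw_imp_surj_on[OF isov_bij[OF f]])
  hence "ground (free_product_list Ns) = {}" by (simp add: fpl_Nil)
  hence e: "\<forall>Y\<in>set Ns. ground Y = {}" unfolding fpl_ground by simp
  have "Ns = []"
  proof (rule ccontr)
    assume "Ns \<noteq> []"
    then obtain Y where Y: "Y \<in> set Ns" by (cases Ns) auto
    hence "irreducible_matroid Y" using Nil.prems(2) by blast
    hence "ground Y \<noteq> {}" by (rule irr_ne)
    thus False using e Y by simp
  qed
  thus ?case by simp
next
  case (Cons A Ms)
  note pr = Cons.prems
  let ?P = "free_product_list (A # Ms)"
  let ?P' = "free_product_list Ms"
  obtain f where f: "isov f ?P (free_product_list Ns)" using pr(7) unfolding iso_isov by blast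
  have irrA: "irreducible_matroid A" using pr(1) by simp
  have mA: "matroid A" and neA: "ground A \<noteq> {}" using irr_m[OF irrA] irr_ne[OF irrA] by auto
  show ?case
  proof (cases Ns)
    case Nil
    have "ground ?P = {}"
      using bij_betw_imp_surj_on[OF isov_bij[OF f]] Nil by (simp add: fpl_Nil)
    thus ?thesis using neA by (simp add: fpl_Cons)
  next
    case (Cons C Ns')
    let ?Q = "free_product_list Ns"
    let ?Q' = "free_product_list Ns'"
    have irrC: "irreducible_matroid C" using pr(2) Cons by simp
    have mC: "matroid C" and neC: "ground C \<noteq> {}" using irr_m[OF irrC] irr_ne[OF irrC] by auto
    have mP: "matroid ?P" using pr(5) .
    have mQ: "matroid ?Q" using pr(6) .
    have Peq: "?P = free_product A ?P'" by (simp add: fpl_Cons)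
    have Qeq: "?Q = free_product C ?Q'" using Cons by (simp add: fpl_Cons)
    have allM: "\<forall>N\<in>set Ms. matroid N" using pr(1) by (auto intro: irr_m)
    have allN: "\<forall>N\<in>set Ns'. matroid N" using pr(2) Cons by (auto intro: irr_m)
    have pdM: "pairwise_disjoint_grounds Ms" "ground A \<inter> ground ?P' = {}" using pdg_tail[OF pr(3)] by auto
    have pdN: "pairwise_disjoint_grounds Ns'" "ground C \<inter> ground ?Q' = {}" using pdg_tail[of C Ns'] pr(4) Cons by auto
    have dP: "restr ?P (ground A) = A" "contr ?P (ground A) = ?P'" "goodin ?P (ground ?P) (ground A)"
      using fp_decomp[OF mP Peq mA pdM(2) fpl_indep_empty[OF allM] fpl_indep_ground] by auto
    have dQ: "restr ?Q (ground C) = C" "contr ?Q (ground C) = ?Q'" "goodin ?Q (ground ?Q) (ground C)"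
      using fp_decomp[OF mQ Qeq mC pdN(2) fpl_indep_empty[OF allN] fpl_indep_ground] by auto
    have SA: "ground A \<subseteq> ground ?P" using Peq by simp
    have SC: "ground C \<subseteq> ground ?Q" using Qeq by simp
    have pA: "primeset ?P (ground A)" using irred_prime[OF mP SA] dP(1) irrA by simp
    have pC: "primeset ?Q (ground C)" using irred_prime[OF mQ SC] dQ(1) irrC by simp
    let ?g = "inv_into (ground ?P) f"
    have g: "isov ?g ?Q ?P" using isov_sym[OF f] .
    let ?T = "?g ` ground C"
    have surg: "?g ` ground ?Q = ground ?P" using bij_betw_imp_surj_on[OF isov_bij[OF g]] .
    have T: "?T \<subseteq> ground ?P" using SC surg by blast
    have gT: "goodin ?P (ground ?P) ?T" using isov_good[OF g order_refl SC dQ(3)] surg by simp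
    have pT: "primeset ?P ?T" using isov_prime[OF g SC pC] .
    have neT: "?T \<noteq> {}" using neC by simp
    have c: "matroid_iso (restr ?P (ground A)) (restr ?P ?T) \<and> matroid_iso (contr ?P (ground A)) (contr ?P ?T)"
      using core[OF mP SA T neA neT dP(3) gT pA pT] .
    have r1: "isov ?g (restr ?Q (ground C)) (restr ?P ?T)" using isov_restr[OF g SC] .
    have r2: "isov ?g (contr ?Q (ground C)) (contr ?P ?T)" using isov_contr[OF g SC] .
    have isoAC: "matroid_iso A C"
    proof -
      have "matroid_iso C (restr ?P ?T)" using isov_iso[OF r1] dQ(1) by simp
      hence "matroid_iso (restr ?P ?T) C" by (rule iso_sym)
      moreover have "matroid_iso A (restr ?P ?T)" using c dP(1) by simp
      ultimately show ?thesis by (rule iso_trans[rotated])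
    qed
    have isoPQ: "matroid_iso ?P' ?Q'"
    proof -
      have "matroid_iso ?Q' (contr ?P ?T)" using isov_iso[OF r2] dQ(2) by simp
      hence "matroid_iso (contr ?P ?T) ?Q'" by (rule iso_sym)
      moreover have "matroid_iso ?P' (contr ?P ?T)" using c dP(2) by simp
      ultimately show ?thesis by (rule iso_trans[rotated])
    qed
    have mP': "matroid ?P'" using matroid_contr[OF mP SA] dP(2) by simp
    have mQ': "matroid ?Q'" using matroid_contr[OF mQ SC] dQ(2) by simp
    have irrMs: "\<forall>X\<in>set Ms. irreducible_matroid X" using pr(1) by simp
    have irrNs: "\<forall>Y\<in>set Ns'. irreducible_matroid Y" using pr(2) Cons by simp
    have IH: "length Ms = length Ns' \<and> (\<forall>i<length Ms. matroid_iso (Ms ! i) (Ns' ! i))"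
      using Cons.IH[OF irrMs irrNs pdM(1) pdN(1) mP' mQ' isoPQ] .
    have "\<forall>i<length (A # Ms). matroid_iso ((A # Ms) ! i) (Ns ! i)"
    proof (intro allI impI)
      fix i assume i: "i < length (A # Ms)"
      show "matroid_iso ((A # Ms) ! i) (Ns ! i)"
      proof (cases i)
        case 0 thus ?thesis using isoAC Cons by simp
      next
        case (Suc j) thus ?thesis using IH i Cons by simp
      qed
    qed
    thus ?thesis using IH Cons by simp
  qed
qed

theorem theorem6p17:
  fixes M :: "'a matroid" and Ms :: "'b matroid list" and Ns :: "'c matroid list"
  assumes "matroid M"
    and "\<forall>X\<in>set Ms. irreducible_matroid X"
    and "\<forall>Y\<in>set Ns. irreducible_matroid Y"
    and "pairwise_disjoint_grounds Ms"
    and "pairwise_disjoint_grounds Ns"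
    and "matroid_iso M (free_product_list Ms)"
    and "matroid_iso M (free_product_list Ns)"
  shows "length Ms = length Ns \<and> (\<forall>i<length Ms. matroid_iso (Ms ! i) (Ns ! i))"
proof -
  obtain f where f: "isov f M (free_product_list Ms)" using assms(6) iso_isov by blast
  obtain g where g: "isov g M (free_product_list Ns)" using assms(7) iso_isov by blast
  have m1: "matroid (free_product_list Ms)" using isov_matroid[OF assms(1) f fpl_indep_ground] .
  have m2: "matroid (free_product_list Ns)" using isov_matroid[OF assms(1) g fpl_indep_ground] .
  have "matroid_iso (free_product_list Ms) (free_product_list Ns)"
    using iso_trans[OF iso_sym[OF assms(6)] assms(7)] .
  thus ?thesis using main_ind[OF assms(2-5) m1 m2] by simp
qed

end
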